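(* Let $g>0$, let $\hat\nu:\mathbb R\to[\nu_0,\nu_1]$ be a stretch-limiting constitutive function as in the context, and let $\epsilon\in(0,1)$. For $\gamma>0$ and $a\in(0,\nu_1)$ let $(\lambda,\mu)$, $\lambda>0$, be the unique solution of $$a\mathbf i+0\,\mathbf k=\int_0^1\frac{\hat\nu(\delta(s))}{\delta(s)}\big(\lambda\mathbf i+(\mu+g\gamma s)\mathbf k\big)\,ds,\qquad \delta(s)=\sqrt{\lambda^2+(\mu+g\gamma s)^2}.$$ Then for all $\gamma>0$ sufficiently small (depending on $\epsilon$ and $\hat\nu$) the following holds. If $$\nu_1-\frac{(g\gamma)^2}{24N_1^2}\big(\nu_1+(2-3\epsilon)\hat\nu_{N^-}(N_1)N_1\big)\le a<\nu_1\frac{2N_1}{g\gamma}\sinh^{-1}\frac{g\gamma}{2N_1},$$ then $\frac{N_1^2-\lambda^2}{(g\gamma)^2}\in(0,\tfrac14)$, i.e. the tensile catenary is a union of an extensible segment and two inextensible segments. Conversely, if $\frac{N_1^2-\lambda^2}{(g\gamma)^2}\in(0,\tfrac14)$, then $$\nu_1-\frac{(g\gamma)^2}{24N_1^2}\big(\nu_1+(2+3\epsilon)\hat\nu_{N^-}(N_1)N_1\big)\le a<\nu_1\frac{2N_1}{g\gamma}\sinh^{-1}\frac{g\gamma}{2N_1}.$$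
   Context: Stretch-limited constitutive function: constants $N_0<0<N_1$, $0<\nu_0<1<\nu_1$ with $\hat\nu(N)=\nu_0$ for $N\le N_0$, $\hat\nu(N)=\nu_1$ for $N\ge N_1$, $\hat\nu\in C^\infty([N_0,N_1];[\nu_0,\nu_1])$, $\hat\nu(0)=1$, $\hat\nu'\ge c>0$ on $[N_0,N_1]$; $\hat\nu_{N^-}(N_1)$ is the left derivative of $\hat\nu$ at $N_1$. The equation describes a tensile uniform catenary (mass $\gamma$ per unit reference length) with supports at $\mathbf 0$ and $a\mathbf i$, tension $N(s)=\delta(s)$, stretch $\hat\nu(\delta(s))$. It is a known fact that for $a\in(0,\nu_1)$ a unique solution with $\lambda>0$ exists, and $\mu=-g\gamma/2$. A segment is inextensible where $\delta\ge N_1$ (stretch $\nu_1$) and extensible where $\delta<N_1$; the condition $\frac{N_1^2-\lambda^2}{(g\gamma)^2}\in(0,1/4)$ is equivalent to $\delta\ge N_1$ on $[0,s_-]\cup[s_+,1]$ and $0<\delta<N_1$ on $(s_-,s_+)$, where $s_\pm=\frac12\pm\frac{1}{g\gamma}\sqrt{N_1^2-\lambda^2}$. *)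

theory Defs
  imports "HOL-Analysis.Analysis"
begin

text \<open>Smoothness on the closed interval [N0,N1] is expressed by
  agreement on [N0,N1] with a C-infinity function f on the real line.\<close>
definition stretch_limited ::
  "real \<Rightarrow> real \<Rightarrow> real \<Rightarrow> real \<Rightarrow> (real \<Rightarrow> real) \<Rightarrow> bool" where
  "stretch_limited N0 N1 nu0 nu1 nu \<longleftrightarrow>
     N0 < 0 \<and> 0 < N1 \<and> 0 < nu0 \<and> nu0 < 1 \<and> 1 < nu1 \<and>
     (\<forall>N. N \<le> N0 \<longrightarrow> nu N = nu0) \<and>
     (\<forall>N. N1 \<le> N \<longrightarrow> nu N = nu1) \<and>
     (\<forall>N. nu0 \<le> nu N \<and> nu N \<le> nu1) \<and>
     nu 0 = 1 \<and>
     (\<exists>f c. (\<forall>k x. ((deriv ^^ k) f) differentiable (at x)) \<and>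
            (\<forall>x\<in>{N0..N1}. f x = nu x) \<and>
            0 < c \<and> (\<forall>x\<in>{N0..N1}. c \<le> deriv f x))"

definition left_deriv :: "(real \<Rightarrow> real) \<Rightarrow> real \<Rightarrow> real" where
  "left_deriv f x = (THE D. (f has_real_derivative D) (at x within {..x}))"

definition cat_delta :: "real \<Rightarrow> real \<Rightarrow> real \<Rightarrow> real \<Rightarrow> real \<Rightarrow> real" where
  "cat_delta g \<gamma> lam mu s = sqrt (lam\<^sup>2 + (mu + g * \<gamma> * s)\<^sup>2)"

definition catenary_solution ::
  "(real \<Rightarrow> real) \<Rightarrow> real \<Rightarrow> real \<Rightarrow> real \<Rightarrow> real \<Rightarrow> real \<Rightarrow> bool" where
  "catenary_solution nu g \<gamma> a lam mu \<longleftrightarrow>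
     a = integral {0..1} (\<lambda>s. nu (cat_delta g \<gamma> lam mu s) / cat_delta g \<gamma> lam mu s * lam) \<and>
     0 = integral {0..1} (\<lambda>s. nu (cat_delta g \<gamma> lam mu s) / cat_delta g \<gamma> lam mu s
                                * (mu + g * \<gamma> * s))"

end

theory Submission
  imports Defs
begin


lemma nu_props:
  assumes "stretch_limited N0 N1 nu0 nu1 nu"
  obtains f where "continuous_on UNIV f" "\<And>x. nu x = f (max N0 (min N1 x))"
    "\<And>x y. x \<le> y \<Longrightarrow> nu x \<le> nu y"
    "(nu has_real_derivative deriv f N1) (at N1 within {..N1})" "deriv f N1 > 0"
proof -
  from assms obtain f c where
    ax: "N0 < 0" "0 < N1" "0 < nu0" "nu0 < 1" "1 < nu1"
     "\<forall>N. N \<le> N0 \<longrightarrow> nu N = nu0" "\<forall>N. N1 \<le> N \<longrightarrow> nu N = nu1"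
     "\<forall>N. nu0 \<le> nu N \<and> nu N \<le> nu1" and df: "\<forall>k x. ((deriv ^^ k) f) differentiable (at x)"
     and fe: "\<forall>x\<in>{N0..N1}. f x = nu x" and c: "0 < c" "\<forall>x\<in>{N0..N1}. c \<le> deriv f x"
    unfolding stretch_limited_def by blast
  have d0: "f differentiable (at x)" for x using df[rule_format, of 0 x] by simp
  have D: "(f has_real_derivative deriv f x) (at x)" for x
    using d0 DERIV_deriv_iff_real_differentiable by blast
  have cont: "continuous_on UNIV f"
    by (meson D DERIV_isCont continuous_at_imp_continuous_on)
  have eq: "nu x = f (max N0 (min N1 x))" for x
  proof -
    consider "x \<le> N0" | "N1 \<le> x" | "N0 \<le> x \<and> x \<le> N1" by linarith
    then show ?thesis
    proof cases
      case 1 then show ?thesis using ax fe by (auto simp: max_def min_def)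
    next
      case 2 then show ?thesis using ax fe by (auto simp: max_def min_def)
    next
      case 3 then show ?thesis using ax fe by (auto simp: max_def min_def)
    qed
  qed
  have fmono: "f x \<le> f y" if "N0 \<le> x" "x \<le> y" "y \<le> N1" for x y
    apply (rule DERIV_nonneg_imp_increasing_open[OF \<open>x \<le> y\<close>])
    subgoal for z
    proof -
      assume z: "x < z" "z < y"
      have "c \<le> deriv f z" using c(2) z that by auto
      then show ?thesis using D[of z] c(1) by (intro exI[of _ "deriv f z"]) auto
    qed
    using cont continuous_on_subset by blast
  have mono: "nu x \<le> nu y" if "x \<le> y" for x y
    unfolding eq by (rule fmono) (use that ax in \<open>auto simp: max_def min_def\<close>)
  have "(f has_real_derivative deriv f N1) (at N1 within {..N1})"
    using D has_field_derivative_at_within by blast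
  then have "(nu has_real_derivative deriv f N1) (at N1 within {..N1})"
    by (rule has_field_derivative_transform_within[where d="N1 - N0"]) (use fe ax in \<open>auto simp: dist_real_def\<close>)
  moreover have "deriv f N1 > 0" using c(2)[rule_format, of N1] c(1) ax by auto
  ultimately show ?thesis using that cont eq mono by blast
qed

lemma left_deriv_eq:
  assumes "(nu has_real_derivative D) (at x within {..x})"
  shows "left_deriv nu x = D"
proof -
  have nb: "at x within {..x} \<noteq> bot"
    by (simp add: at_within_Iic_at_left)
  show ?thesis unfolding left_deriv_def
    using has_field_derivative_unique[OF _ assms nb] assms by (intro the_equality) blast+
qed

lemma integral_pos_cont:
  fixes F :: "real \<Rightarrow> real"
  assumes "continuous_on {a..b} F" "a < b" "\<And>x. x \<in> {a..b} \<Longrightarrow> 0 < F x"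
  shows "0 < integral {a..b} F"
proof -
  obtain x0 where x0: "x0 \<in> {a..b}" "\<forall>y\<in>{a..b}. F x0 \<le> F y"
    using continuous_attains_inf[OF compact_Icc _ assms(1)] assms(2) by auto
  have "integral {a..b} (\<lambda>_. F x0) \<le> integral {a..b} F"
    by (rule integral_le) (use x0 integrable_continuous_interval assms(1) in auto)
  moreover have "integral {a..b} (\<lambda>_. F x0) = (b - a) * F x0" using assms(2) by simp
  moreover have "0 < (b - a) * F x0" using assms x0 by simp
  ultimately show ?thesis by linarith
qed

lemma integral_reflect01:
  fixes F :: "real \<Rightarrow> real"
  assumes "F integrable_on {0..1}"
  shows "integral {0..1} (\<lambda>s. F (1 - s)) = integral {0..1} F"
proof -
  have "(F has_integral integral {0..1} F) (cbox 0 1)" using assms by (simp add: integrable_integral)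
  from has_integral_affinity[OF this, of "-1" 1]
  have "((\<lambda>x. F (- 1 * x + 1)) has_integral integral {0..1} F) ((\<lambda>x. - x + 1) ` {0..1})" by simp
  moreover have "(\<lambda>x. - x + 1) ` {0..1::real} = {0..1}"
    by (auto simp: image_iff intro!: bexI[where x="1 - _"])
  ultimately show ?thesis by (simp add: integral_unique)
qed

lemma q_strict:
  fixes l t1 t2 :: real
  assumes "0 < l" "t1 < t2"
  shows "t1 / sqrt (l^2 + t1^2) < t2 / sqrt (l^2 + t2^2)"
proof -
  define A where "A = sqrt (l^2 + t1^2)"
  define B where "B = sqrt (l^2 + t2^2)"
  have A: "A > 0" "A^2 = l^2 + t1^2" unfolding A_def using assms by (auto intro!: add_pos_nonneg)
  have B: "B > 0" "B^2 = l^2 + t2^2" unfolding B_def using assms by (auto intro!: add_pos_nonneg)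
  have e1: "(t1*B)^2 = t1^2*l^2 + t1^2*t2^2" using B by (simp add: power_mult_distrib algebra_simps)
  have e2: "(t2*A)^2 = t2^2*l^2 + t1^2*t2^2" using A by (simp add: power_mult_distrib algebra_simps)
  have l2: "l^2 > 0" using assms by simp
  have "t1 * B < t2 * A"
  proof -
    consider "t1 < 0 \<and> 0 \<le> t2" | "0 \<le> t1" | "t2 < 0" using assms by linarith
    then show ?thesis
    proof cases
      case 1 then show ?thesis using A B
        by (metis mult_neg_pos mult_nonneg_nonneg not_less order_less_le_trans less_imp_le)
    next
      case 2
      have "t1^2 < t2^2" using 2 assms by (simp add: power_strict_mono)
      then have "(t1*B)^2 < (t2*A)^2" unfolding e1 e2 using l2 by simp
      moreover have "0 \<le> t2 * A" using 2 assms A by simp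
      ultimately show ?thesis using power2_less_imp_less by blast
    next
      case 3
      have "(-t2)^2 < (-t1)^2" by (rule power_strict_mono) (use 3 assms in auto)
      then have "t2^2 < t1^2" by simp
      then have "(-(t2*A))^2 < (-(t1*B))^2" unfolding power2_minus e1 e2 using l2 by simp
      moreover have "0 \<le> -(t1 * B)" using 3 assms B by (simp add: mult_nonpos_nonneg)
      ultimately show ?thesis using power2_less_imp_less by fastforce
    qed
  qed
  then show ?thesis using A B unfolding A_def[symmetric] B_def[symmetric] by (simp add: field_simps)
qed

lemma P_strict:
  fixes nu :: "real \<Rightarrow> real"
  assumes "0 < l" "\<And>x y. x \<le> y \<Longrightarrow> nu x \<le> nu y" "\<And>x. 0 < nu x" "t1 < t2"
  shows "nu (sqrt (l^2 + t1^2)) / sqrt (l^2 + t1^2) * t1 < nu (sqrt (l^2 + t2^2)) / sqrt (l^2 + t2^2) * t2"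
proof -
  define q1 where "q1 = t1 / sqrt (l^2 + t1^2)"
  define q2 where "q2 = t2 / sqrt (l^2 + t2^2)"
  define V1 where "V1 = nu (sqrt (l^2 + t1^2))"
  define V2 where "V2 = nu (sqrt (l^2 + t2^2))"
  have q: "q1 < q2" unfolding q1_def q2_def using q_strict assms by blast
  have V: "V1 > 0" "V2 > 0" unfolding V1_def V2_def using assms by auto
  have "V1 * q1 < V2 * q2"
  proof -
    consider "0 \<le> t1" | "t2 \<le> 0" | "t1 < 0 \<and> 0 < t2" by linarith
    then show ?thesis
    proof cases
      case 1
      have "t1^2 \<le> t2^2" using 1 assms by (simp add: power_mono)
      then have "V1 \<le> V2" unfolding V1_def V2_def by (intro assms(2) real_sqrt_le_mono) simp
      moreover have "q1 \<ge> 0" unfolding q1_def using 1 by simp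
      ultimately have "V1 * q1 \<le> V2 * q1" by (simp add: mult_right_mono)
      also have "\<dots> < V2 * q2" using q V by simp
      finally show ?thesis .
    next
      case 2
      have "(-t2)^2 \<le> (-t1)^2" using 2 assms by (intro power_mono) auto
      then have "t2^2 \<le> t1^2" by simp
      then have "V2 \<le> V1" unfolding V1_def V2_def by (intro assms(2) real_sqrt_le_mono) simp
      moreover have "q2 \<le> 0" unfolding q2_def using 2 by (simp add: divide_nonpos_nonneg)
      ultimately have "V1 * q1 \<le> V2 * q1" using q by (simp add: mult_right_mono_neg)
      also have "\<dots> < V2 * q2" using q V by simp
      finally show ?thesis .
    next
      case 3
      have "q1 < 0" unfolding q1_def using 3 assms by (simp add: divide_neg_pos add_pos_nonneg)
      moreover have "q2 > 0" unfolding q2_def using 3 assms by (simp add: add_pos_nonneg)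
      ultimately have "V1 * q1 < 0" "0 < V2 * q2" using V by (auto simp: mult_pos_neg)
      then show ?thesis by linarith
    qed
  qed
  then show ?thesis unfolding V1_def V2_def q1_def q2_def by simp
qed


lemma mu_eq:
  fixes nu :: "real \<Rightarrow> real"
  assumes "0 < l" "0 < g" "0 < \<gamma>" "\<And>x y. x \<le> y \<Longrightarrow> nu x \<le> nu y" "\<And>x. 0 < nu x"
    "continuous_on UNIV nu"
    "0 = integral {0..1} (\<lambda>s. nu (cat_delta g \<gamma> l mu s) / cat_delta g \<gamma> l mu s * (mu + g * \<gamma> * s))"
  shows "mu = - (g * \<gamma>) / 2"
proof -
  define P where "P t = nu (sqrt (l^2 + t^2)) / sqrt (l^2 + t^2) * t" for t
  have Podd: "P (-t) = - P t" for t unfolding P_def by simp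
  have Pst: "P t1 < P t2" if "t1 < t2" for t1 t2 unfolding P_def using P_strict assms that by blast
  define psi where "psi s = P (mu + g * \<gamma> * s)" for s
  have sq: "sqrt (l^2 + x^2) \<noteq> 0" for x using assms(1) by (simp add: add_pos_nonneg)
  have cP: "continuous_on UNIV P" unfolding P_def
    by (intro continuous_intros continuous_on_compose2[OF assms(6)]) (use assms(1) in \<open>auto simp: sq\<close>)
  have cpsi: "continuous_on {0..1} psi" unfolding psi_def
    by (intro continuous_intros continuous_on_compose2[OF cP]) auto
  have z: "integral {0..1} psi = 0" using assms(7) unfolding psi_def P_def cat_delta_def by simp
  have ipsi: "psi integrable_on {0..1}" using cpsi integrable_continuous_interval by blast
  have ipsi2: "(\<lambda>s. psi (1 - s)) integrable_on {0..1}"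
    by (rule integrable_continuous_interval)
       (rule continuous_on_compose2[OF cpsi]; auto intro!: continuous_intros)
  have sumz: "integral {0..1} (\<lambda>s. psi s + psi (1 - s)) = 0"
    using integral_add[OF ipsi ipsi2] integral_reflect01[OF ipsi] z by simp
  have csum: "continuous_on {0..1} (\<lambda>s. psi s + psi (1 - s))"
    by (intro continuous_intros cpsi continuous_on_compose2[OF cpsi]) auto
  have key: "psi s + psi (1 - s) = P (mu + g * \<gamma> * s) - P (- mu - g * \<gamma> + g * \<gamma> * s)" for s
    unfolding psi_def using Podd[of "mu + g * \<gamma> * (1 - s)"] by (simp add: algebra_simps)
  show ?thesis
  proof (rule ccontr)
    assume ne: "mu \<noteq> - (g * \<gamma>) / 2"
    then consider "2 * mu + g * \<gamma> > 0" | "2 * mu + g * \<gamma> < 0" by linarith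
    then show False
    proof cases
      case 1
      have "0 < integral {0..1} (\<lambda>s. psi s + psi (1 - s))"
      proof (rule integral_pos_cont[OF csum])
        fix s :: real
        show "0 < psi s + psi (1 - s)" unfolding key using Pst[of "- mu - g * \<gamma> + g * \<gamma> * s" "mu + g * \<gamma> * s"] 1 by simp
      qed simp
      then show False using sumz by simp
    next
      case 2
      have "0 < integral {0..1} (\<lambda>s. - (psi s + psi (1 - s)))"
      proof (rule integral_pos_cont)
        show "continuous_on {0..1} (\<lambda>s. - (psi s + psi (1 - s)))" using continuous_on_minus[OF csum] by simp
        fix s :: real
        show "0 < - (psi s + psi (1 - s))" unfolding key using Pst[of "mu + g * \<gamma> * s" "- mu - g * \<gamma> + g * \<gamma> * s"] 2 by simp
      qed simp
      then show False using sumz integral_neg[of "{0..1}" "\<lambda>s. psi s + psi (1 - s)"] by simp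
    qed
  qed
qed



lemma X_bounds:
  fixes w :: real assumes "0 \<le> w" "w \<le> 1/2"
  shows "\<bar>sqrt (1 - w) - (1 - w/2)\<bar> \<le> w^2" "sqrt (1 - w) \<le> 1 - w/2" "1 - w/2 - w^2 \<le> sqrt (1 - w)"
proof -
  have u: "sqrt (1 - w) \<le> 1 - w/2"
    by (rule real_le_lsqrt) (use assms in \<open>auto simp: power2_eq_square algebra_simps\<close>)
  have l: "1 - w/2 - w^2 \<le> sqrt (1 - w)"
  proof (rule real_le_rsqrt)
    have "(1 - w/2 - w^2)^2 = 1 - w - (7/4) * w^2 + w^3 + w^4" by (simp add: power2_eq_square power3_eq_cube power4_eq_xxxx algebra_simps)
    also have "\<dots> \<le> 1 - w"
    proof -
      have a: "w^3 \<le> w^2 * (1/2)" using assms unfolding power3_eq_cube power2_eq_square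
        by (intro mult_left_mono) auto
      have "w^2 \<le> (1/2)^2" using assms by (intro power_mono) auto
      then have "w^2 * w^2 \<le> w^2 * (1/2)^2" by (intro mult_left_mono) auto
      then have b: "w^4 \<le> w^2 * (1/4)" by (simp add: eval_nat_numeral field_simps)
      have "0 \<le> w^2" by simp
      then show ?thesis using a b by linarith
    qed
    finally show "(1 - w/2 - w^2)^2 \<le> 1 - w" .
  qed
  show "\<bar>sqrt (1 - w) - (1 - w/2)\<bar> \<le> w^2" using u l by (simp add: abs_le_iff)
  show "sqrt (1 - w) \<le> 1 - w/2" "1 - w/2 - w^2 \<le> sqrt (1 - w)" using u l by auto
qed

lemma Y_bounds:
  fixes v :: real assumes "0 \<le> v" "v \<le> 1/2"
  shows "\<bar>1 / sqrt (1 - v) - (1 + v/2)\<bar> \<le> v^2" "1 / sqrt (1 - v) \<le> 2"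
proof -
  have p: "0 < 1 - v" using assms by simp
  have e: "1 / sqrt (1 - v) = sqrt (1 / (1 - v))" by (simp add: real_sqrt_divide)
  have l: "1 + v/2 \<le> sqrt (1 / (1 - v))"
  proof (rule real_le_rsqrt)
    have "(1 + v/2)^2 * (1 - v) = 1 - (3/4) * v^2 - (1/4) * v^3" by (simp add: eval_nat_numeral field_simps)
    moreover have "0 \<le> v^3" "0 \<le> v^2" using assms by auto
    ultimately have "(1 + v/2)^2 * (1 - v) \<le> 1" by linarith
    then show "(1 + v/2)^2 \<le> 1 / (1 - v)" using p by (simp add: le_divide_eq)
  qed
  have u: "sqrt (1 / (1 - v)) \<le> 1 + v/2 + v^2"
  proof (rule real_le_lsqrt)
    show "0 \<le> 1 + v/2 + v^2" using assms by simp
    have "(1 + v/2 + v^2)^2 * (1 - v) = 1 + (5/4) * v^2 - (5/4) * v^3 - v^5" by (simp add: eval_nat_numeral field_simps)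
    moreover have "v^3 \<le> v^2 * (1/2)" using assms unfolding power3_eq_cube power2_eq_square
        by (intro mult_left_mono) auto
    moreover have "v^5 \<le> v^2 * (1/8)"
    proof -
      have "v^3 \<le> (1/2)^3" using assms by (intro power_mono) auto
      then have "v^2 * v^3 \<le> v^2 * (1/2)^3" by (intro mult_left_mono) auto
      then show ?thesis by (simp add: eval_nat_numeral field_simps)
    qed
    moreover have "0 \<le> v^2" by simp
    ultimately have "1 \<le> (1 + v/2 + v^2)^2 * (1 - v)" by linarith
    then
    show "1 / (1 - v) \<le> (1 + v/2 + v^2)^2" using p by (simp add: divide_le_eq)
  qed
  show "\<bar>1 / sqrt (1 - v) - (1 + v/2)\<bar> \<le> v^2" using l u e by (simp add: abs_le_iff)
  have "v^2 \<le> (1/2)^2" using assms by (intro power_mono) auto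
  then have "v^2 \<le> 1/4" by (simp add: power_divide)
  then show "1 / sqrt (1 - v) \<le> 2" using u e assms by linarith
qed

lemma eta_bounds:
  fixes v :: real assumes "0 \<le> v" "v \<le> 1/2"
  shows "v/2 \<le> 1 - sqrt (1 - v)" "1 - sqrt (1 - v) \<le> v/2 + v^2"
  using X_bounds(2,3)[OF assms] by auto

lemma prod_err:
  fixes X Y Z X0 Y0 Z0 e1 e2 e3 K :: real
  assumes "\<bar>X - X0\<bar> \<le> e1" "\<bar>Y - Y0\<bar> \<le> e2" "\<bar>Z - Z0\<bar> \<le> e3"
    "\<bar>Y\<bar> \<le> 2" "\<bar>Z\<bar> \<le> K" "\<bar>X0\<bar> \<le> 1" "\<bar>Y0\<bar> \<le> 2"
  shows "\<bar>X * Y * Z - X0 * Y0 * Z0\<bar> \<le> e1 * 2 * K + e2 * K + 2 * e3"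
proof -
  have eq: "X * Y * Z - X0 * Y0 * Z0 = (X - X0) * Y * Z + X0 * (Y - Y0) * Z + X0 * Y0 * (Z - Z0)"
    by (simp add: algebra_simps)
  have 1: "\<bar>(X - X0) * Y * Z\<bar> \<le> e1 * 2 * K" unfolding abs_mult
    using assms by (intro mult_mono) auto
  have 2: "\<bar>X0 * (Y - Y0) * Z\<bar> \<le> 1 * e2 * K" unfolding abs_mult
    using assms by (intro mult_mono) auto
  have 3: "\<bar>X0 * Y0 * (Z - Z0)\<bar> \<le> 1 * 2 * e3" unfolding abs_mult
    using assms by (intro mult_mono) auto
  have t: "\<bar>a + b + c\<bar> \<le> \<bar>a\<bar> + \<bar>b\<bar> + \<bar>c\<bar>" for a b c :: real by linarith
  show ?thesis unfolding eq using 1 2 3 t[of "(X - X0) * Y * Z" "X0 * (Y - Y0) * Z" "X0 * Y0 * (Z - Z0)"] by linarith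
qed


lemma pw:
  fixes nu :: "real \<Rightarrow> real"
  assumes v: "0 \<le> v" "v \<le> w" "w \<le> 1/2" and N1: "0 < N1" and c1: "0 < c1" and ka: "0 \<le> \<kappa>"
    and der: "\<And>y. N1 - \<rho> < y \<Longrightarrow> y \<le> N1 \<Longrightarrow> \<bar>nu y - nu1 + c1 * (N1 - y)\<bar> \<le> \<kappa> * (N1 - y)"
    and rho: "N1 * w < \<rho>" and bnd: "\<And>y. 0 \<le> nu y" "\<And>y. nu y \<le> nu1"
  shows "\<bar>sqrt (1 - w) * (1 / sqrt (1 - v)) * nu (N1 * sqrt (1 - v))
          - (nu1 - nu1 * w / 2 + (nu1 - c1 * N1) * v / 2)\<bar>
         \<le> (4 * nu1 + 3 * (c1 * N1)) * w^2 + 2 * \<kappa> * N1 * w"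
proof -
  define B where "B = c1 * N1"
  have B: "0 < B" unfolding B_def using c1 N1 by simp
  have v2: "v \<le> 1/2" using v by linarith
  have w0: "0 \<le> w" using v by linarith
  define X where "X = sqrt (1 - w)"
  define Y where "Y = 1 / sqrt (1 - v)"
  define Z where "Z = nu (N1 * sqrt (1 - v))"
  define X0 where "X0 = 1 - w/2"
  define Y0 where "Y0 = 1 + v/2"
  define Z0 where "Z0 = nu1 - B * v / 2"
  have eX: "\<bar>X - X0\<bar> \<le> w^2" unfolding X_def X0_def using X_bounds(1)[OF w0 v(3)] .
  have eY: "\<bar>Y - Y0\<bar> \<le> v^2" "Y \<le> 2" unfolding Y_def Y0_def using Y_bounds[OF v(1) v2] by auto
  have Y0: "0 \<le> Y" unfolding Y_def using v2 by simp
  have vv: "v^2 \<le> v * (1/2)" using v unfolding power2_eq_square by (intro mult_left_mono) auto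
  define eta where "eta = N1 * (1 - sqrt (1 - v))"
  have et: "N1 * (v/2) \<le> eta" "eta \<le> N1 * (v/2 + v^2)" unfolding eta_def
    using eta_bounds[OF v(1) v2] N1 by (auto intro: mult_left_mono)
  have "v/2 + v^2 \<le> v" using vv by linarith
  then have "N1 * (v/2 + v^2) \<le> N1 * v" using N1 by (intro mult_left_mono) auto
  then have et2: "eta \<le> N1 * v" using et(2) by linarith
  have et3: "N1 * v \<le> N1 * w" using v N1 by simp
  have "eta < \<rho>" using et2 et3 rho by linarith
  then have y1: "N1 - \<rho> < N1 * sqrt (1 - v)" unfolding eta_def by (simp add: algebra_simps)
  have "sqrt (1 - v) \<le> 1" using v by simp
  then have "N1 * sqrt (1 - v) \<le> N1" using N1 by (simp add: mult_left_le)
  note yin = y1 this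
  have d: "\<bar>Z - nu1 + c1 * eta\<bar> \<le> \<kappa> * eta"
    using der[OF yin] unfolding Z_def eta_def by (simp add: algebra_simps)
  have "\<bar>eta - N1 * (v/2)\<bar> \<le> N1 * v^2" using et N1 by (simp add: algebra_simps abs_le_iff)
  then have "c1 * \<bar>eta - N1 * (v/2)\<bar> \<le> c1 * (N1 * v^2)" using c1 by (intro mult_left_mono) auto
  moreover have "c1 * eta - B * v / 2 = c1 * (eta - N1 * (v/2))" unfolding B_def by (simp add: algebra_simps)
  ultimately have "\<bar>c1 * eta - B * v / 2\<bar> \<le> B * v^2" unfolding B_def using c1 by (simp add: abs_mult mult.assoc)
  moreover have "\<kappa> * eta \<le> \<kappa> * N1 * v" using et2 ka by (simp add: mult_left_mono mult.assoc)
  ultimately have eZ: "\<bar>Z - Z0\<bar> \<le> B * v^2 + \<kappa> * N1 * v" using d unfolding Z0_def by linarith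
  have Zb: "\<bar>Z\<bar> \<le> nu1" unfolding Z_def using bnd by (simp add: abs_le_iff)
  have X0b: "\<bar>X0\<bar> \<le> 1" unfolding X0_def using v by simp
  have Y0b: "\<bar>Y0\<bar> \<le> 2" unfolding Y0_def using v by simp
  have P: "\<bar>X * Y * Z - X0 * Y0 * Z0\<bar> \<le> w^2 * 2 * nu1 + v^2 * nu1 + 2 * (B * v^2 + \<kappa> * N1 * v)"
    by (rule prod_err[OF eX eY(1) eZ]) (use eY Y0 Zb X0b Y0b in auto)
  have id: "X0 * Y0 * Z0 - (nu1 - nu1 * w / 2 + (nu1 - B) * v / 2)
      = - nu1 * (w * v) / 4 + B * (v * w) / 4 - B * v^2 / 4 + B * (w * v^2) / 8"
    unfolding X0_def Y0_def Z0_def by (simp add: field_simps power2_eq_square)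
  have nu1: "0 \<le> nu1" using bnd(1)[of 0] bnd(2)[of 0] by linarith
  have wv: "w * v \<le> w^2" using v unfolding power2_eq_square by (intro mult_left_mono) auto
  have vsq: "v^2 \<le> w^2" using v by (intro power_mono) auto
  have "w * v^2 \<le> 1 * v^2" using v by (intro mult_right_mono) auto
  then have wvv: "w * v^2 \<le> w^2" using vsq by linarith
  have "\<bar>X0 * Y0 * Z0 - (nu1 - nu1 * w / 2 + (nu1 - B) * v / 2)\<bar> \<le> nu1 * w^2 / 4 + B * w^2 / 4 + B * w^2 / 4 + B * w^2 / 8"
  proof -
    have a: "nu1 * (w * v) \<le> nu1 * w^2" using wv nu1 by (rule mult_left_mono) 
    have b: "B * (v * w) \<le> B * w^2" using wv B by (simp add: mult.commute)
    have c: "B * v^2 \<le> B * w^2" using vsq B by simp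
    have dd: "B * (w * v^2) \<le> B * w^2" using wvv B by simp
    have pos: "0 \<le> nu1 * (w * v)" "0 \<le> B * (v * w)" "0 \<le> B * v^2" "0 \<le> B * (w * v^2)"
      using v nu1 B by auto
    show ?thesis unfolding id using a b c dd pos by (simp add: abs_le_iff)
  qed
  moreover have "v^2 * nu1 \<le> w^2 * nu1" using vsq nu1 by (simp add: mult_right_mono)
  moreover have "B * v^2 \<le> B * w^2" using vsq B by simp
  moreover have "\<kappa> * N1 * v \<le> \<kappa> * N1 * w" using v ka N1 by (simp add: mult_left_mono)
  moreover have "0 \<le> B * w^2" "0 \<le> nu1 * w^2" using B nu1 by auto
  ultimately have "\<bar>X * Y * Z - (nu1 - nu1 * w / 2 + (nu1 - B) * v / 2)\<bar> \<le> (4 * nu1 + 3 * B) * w^2 + 2 * \<kappa> * N1 * w"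
    using P by (simp add: algebra_simps abs_le_iff)
  then show ?thesis unfolding X_def Y_def Z_def B_def .
qed


lemma poly_int:
  fixes a b :: real
  shows "((\<lambda>s. a + b * (s * (1 - s))) has_integral (a + b / 6)) {0..1}"
proof -
  have "((\<lambda>s. a + b * (s * (1 - s))) has_integral
        ((\<lambda>s. a * s + b * (s^2/2 - s^3/3)) 1 - (\<lambda>s. a * s + b * (s^2/2 - s^3/3)) 0)) {0..1}"
  proof (rule fundamental_theorem_of_calculus)
    fix x :: real
    show "((\<lambda>s. a * s + b * (s^2/2 - s^3/3)) has_vector_derivative (a + b * (x * (1 - x)))) (at x within {0..1})"
      unfolding has_real_derivative_iff_has_vector_derivative[symmetric]
      by (rule derivative_eq_intros refl | simp)+ (simp add: field_simps power2_eq_square)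
  qed simp
  then show ?thesis by simp
qed

lemma arsinh_int:
  fixes L h nu1 :: real
  assumes "0 < L" "0 < h"
  shows "((\<lambda>s. nu1 / sqrt (L^2 + (- h / 2 + h * s)^2) * L) has_integral nu1 * (2 * L / h) * arsinh (h / (2 * L))) {0..1}"
proof -
  define F where "F s = nu1 * L / h * arsinh ((h * s - h / 2) / L)" for s
  have "((\<lambda>s. nu1 / sqrt (L^2 + (- h / 2 + h * s)^2) * L) has_integral (F 1 - F 0)) {0..1}"
  proof (rule fundamental_theorem_of_calculus)
    fix x :: real
    have e: "sqrt (((h * x - h / 2) / L)^2 + 1) = sqrt (L^2 + (- h / 2 + h * x)^2) / L"
    proof -
      have "((h * x - h / 2) / L)^2 + 1 = (L^2 + (- h / 2 + h * x)^2) / L^2"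
        using assms by (simp add: field_simps power2_eq_square)
      then show ?thesis using assms by (simp add: real_sqrt_divide)
    qed
    have pos: "0 < sqrt (L^2 + (- h / 2 + h * x)^2)" using assms by (simp add: add_pos_nonneg)
    show "(F has_vector_derivative nu1 / sqrt (L^2 + (- h / 2 + h * x)^2) * L) (at x within {0..1})"
    proof -
      have "((\<lambda>s. (h * s - h / 2) / L) has_real_derivative h / L) (at x)"
        using assms by (auto intro!: derivative_eq_intros)
      from DERIV_chain2[OF arsinh_real_has_field_derivative this]
      have "((\<lambda>s. arsinh ((h * s - h / 2) / L)) has_real_derivative
              1 / sqrt (((h * x - h / 2) / L)^2 + 1) * (h / L)) (at x)" .
      then have "(F has_real_derivative nu1 * L / h * (1 / sqrt (((h * x - h / 2) / L)^2 + 1) * (h / L))) (at x)"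
        unfolding F_def by (rule DERIV_cmult)
      moreover have "nu1 * L / h * (1 / sqrt (((h * x - h / 2) / L)^2 + 1) * (h / L)) = nu1 / sqrt (L^2 + (- h / 2 + h * x)^2) * L"
        unfolding e using assms pos by (simp add: field_simps)
      ultimately show ?thesis
        using has_field_derivative_at_within has_real_derivative_iff_has_vector_derivative by metis
    qed
  qed simp
  moreover have "F 1 - F 0 = nu1 * (2 * L / h) * arsinh (h / (2 * L))"
    unfolding F_def using assms by (simp add: field_simps)
  ultimately show ?thesis by simp
qed


lemma est_int:
  fixes nu :: "real \<Rightarrow> real"
  assumes N1: "0 < N1" and c1: "0 < c1" and ka: "0 \<le> \<kappa>"
    and der: "\<And>y. N1 - \<rho> < y \<Longrightarrow> y \<le> N1 \<Longrightarrow> \<bar>nu y - nu1 + c1 * (N1 - y)\<bar> \<le> \<kappa> * (N1 - y)"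
    and bnd: "\<And>y. 0 \<le> nu y" "\<And>y. nu y \<le> nu1" and cont: "continuous_on UNIV nu"
    and g: "0 < g" "0 < \<gamma>" and lam: "lam = sqrt (N1^2 - (g * \<gamma>)^2 / 4)"
    and w: "w = (g * \<gamma>)^2 / (4 * N1^2)" "w \<le> 1/2" "N1 * w < \<rho>"
  shows "\<bar>integral {0..1} (\<lambda>s. nu (cat_delta g \<gamma> lam (-(g * \<gamma>) / 2) s) / cat_delta g \<gamma> lam (-(g * \<gamma>) / 2) s * lam)
           - (nu1 - w / 6 * (nu1 + 2 * (c1 * N1)))\<bar>
         \<le> (4 * nu1 + 3 * (c1 * N1)) * w^2 + 2 * \<kappa> * N1 * w"
proof -
  define h where "h = g * \<gamma>"
  have h: "0 < h" unfolding h_def using g by simp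
  define E where "E = (4 * nu1 + 3 * (c1 * N1)) * w^2 + 2 * \<kappa> * N1 * w"
  define B where "B = c1 * N1"
  define G where "G s = nu (cat_delta g \<gamma> lam (-(g * \<gamma>) / 2) s) / cat_delta g \<gamma> lam (-(g * \<gamma>) / 2) s * lam" for s
  define v where "v s = h^2 * (s * (1 - s)) / N1^2" for s
  define a where "a = nu1 - nu1 * w / 2"
  define b where "b = (nu1 - B) / 2 * (h^2 / N1^2)"
  have w0: "0 \<le> w" unfolding w(1) by simp
  have hw: "h^2 = 4 * N1^2 * w" unfolding w(1) h_def using N1 by simp
  have l2: "N1^2 - h^2/4 = N1^2 * (1 - w)" unfolding hw by (simp add: algebra_simps)
  have lam2: "lam = N1 * sqrt (1 - w)" unfolding lam h_def[symmetric] l2 using N1 by (simp add: real_sqrt_mult)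
  have lampos: "0 < lam" unfolding lam2 using N1 w(2) by simp
  have lsq: "lam^2 = N1^2 - h^2/4" unfolding lam2 l2 using w(2) by (simp add: power_mult_distrib)
  have cd: "cat_delta g \<gamma> lam (-(g * \<gamma>) / 2) s = N1 * sqrt (1 - v s)" for s
  proof -
    have "lam^2 + (-(g * \<gamma>) / 2 + g * \<gamma> * s)^2 = N1^2 * (1 - v s)"
      unfolding lsq v_def h_def[symmetric] using N1 by (simp add: field_simps power2_eq_square)
    then show ?thesis unfolding cat_delta_def using N1 by (simp add: real_sqrt_mult)
  qed
  have vb: "0 \<le> v s \<and> v s \<le> w" if "s \<in> {0..1}" for s
  proof -
    have "s * (1 - s) = 1/4 - (s - 1/2)^2" by (simp add: power2_eq_square field_simps)
    then have "s * (1 - s) \<le> 1/4" using zero_le_power2[of "s - 1/2"] by linarith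
    then have "h^2 * (s * (1 - s)) \<le> h^2 * (1/4)" by (intro mult_left_mono) auto
    moreover have "0 \<le> s * (1 - s)" using that by simp
    ultimately have "v s \<le> h^2 * (1/4) / N1^2" "0 \<le> v s" unfolding v_def
      by (intro divide_right_mono, simp_all)
    moreover have "h^2 * (1/4) / N1^2 = w" unfolding hw using N1 by simp
    ultimately show ?thesis by simp
  qed
  have Geq: "G s = sqrt (1 - w) * (1 / sqrt (1 - v s)) * nu (N1 * sqrt (1 - v s))" if "s \<in> {0..1}" for s
  proof -
    have "v s \<le> 1/2" using vb[OF that] w by linarith
    then have "0 < sqrt (1 - v s)" by simp
    then show ?thesis unfolding G_def cd unfolding lam2 using N1 by (simp add: field_simps)
  qed
  have pwb: "\<bar>G s - (a + b * (s * (1 - s)))\<bar> \<le> E" if "s \<in> {0..1}" for s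
  proof -
    have "a + b * (s * (1 - s)) = nu1 - nu1 * w / 2 + (nu1 - c1 * N1) * v s / 2"
      unfolding a_def b_def v_def B_def using N1 by (simp add: field_simps)
    then show ?thesis unfolding Geq[OF that] E_def
      using pw[of "v s" w N1 c1 \<kappa> \<rho> nu nu1] vb[OF that] w N1 c1 ka der bnd by simp
  qed
  have cdpos: "0 < cat_delta g \<gamma> lam (-(g * \<gamma>) / 2) s" for s
    unfolding cat_delta_def using lampos by (simp add: add_pos_nonneg)
  have Gc: "continuous_on {0..1} G" unfolding G_def cat_delta_def
    by (intro continuous_intros continuous_on_compose2[OF cont])
       (use cdpos in \<open>auto simp: cat_delta_def\<close>)
  have Gi: "G integrable_on {0..1}" using Gc integrable_continuous_interval by blast
  have I1: "((\<lambda>s. (a + E) + b * (s * (1 - s))) has_integral (a + E + b / 6)) {0..1}" by (rule poly_int)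
  have I2: "((\<lambda>s. (a - E) + b * (s * (1 - s))) has_integral (a - E + b / 6)) {0..1}" by (rule poly_int)
  have up: "integral {0..1} G \<le> a + E + b / 6"
    using integral_le[OF Gi has_integral_integrable[OF I1]] integral_unique[OF I1] pwb
    by (simp add: abs_le_iff algebra_simps)
  have lo: "a - E + b / 6 \<le> integral {0..1} G"
    using integral_le[OF has_integral_integrable[OF I2] Gi] integral_unique[OF I2] pwb
    by (simp add: abs_le_iff algebra_simps)
  have "a + b / 6 = nu1 - w / 6 * (nu1 + 2 * (c1 * N1))"
    unfolding a_def b_def hw B_def using N1 by (simp add: field_simps)
  then show ?thesis using up lo unfolding G_def E_def[symmetric] by (simp add: abs_le_iff)
qed



lemma ratio_le:
  fixes l1 l2 t :: real
  assumes "0 < l1" "l1 \<le> l2"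
  shows "l1 / sqrt (l1^2 + t^2) \<le> l2 / sqrt (l2^2 + t^2)"
proof -
  define D1 where "D1 = sqrt (l1^2 + t^2)"
  define D2 where "D2 = sqrt (l2^2 + t^2)"
  have D: "0 < D1" "0 < D2" "D1^2 = l1^2 + t^2" "D2^2 = l2^2 + t^2"
    unfolding D1_def D2_def using assms by (auto intro!: add_pos_nonneg)
  have "l1^2 \<le> l2^2" using assms by (intro power_mono) auto
  then have "l1^2 * t^2 \<le> l2^2 * t^2" by (intro mult_right_mono) auto
  then have "(l1 * D2)^2 \<le> (l2 * D1)^2" unfolding power_mult_distrib D(3,4) by (simp add: algebra_simps)
  moreover have "0 \<le> l2 * D1" using assms D by simp
  ultimately have "l1 * D2 \<le> l2 * D1" by (rule power2_le_imp_le)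
  moreover have "l1 / D1 - l2 / D2 = (l1 * D2 - l2 * D1) / (D1 * D2)" using D by (simp add: field_simps)
  moreover have "0 < D1 * D2" using D by simp
  ultimately have "l1 / D1 - l2 / D2 \<le> 0" by (simp add: divide_nonpos_pos)
  then show ?thesis unfolding D1_def[symmetric] D2_def[symmetric] by simp
qed

lemma ratio_less:
  fixes l1 l2 t :: real
  assumes "0 < l1" "l1 < l2" "t \<noteq> 0"
  shows "l1 / sqrt (l1^2 + t^2) < l2 / sqrt (l2^2 + t^2)"
proof -
  define D1 where "D1 = sqrt (l1^2 + t^2)"
  define D2 where "D2 = sqrt (l2^2 + t^2)"
  have D: "0 < D1" "0 < D2" "D1^2 = l1^2 + t^2" "D2^2 = l2^2 + t^2"
    unfolding D1_def D2_def using assms by (auto intro!: add_pos_nonneg)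
  have "l1^2 < l2^2" using assms by (intro power_strict_mono) auto
  then have "l1^2 * t^2 < l2^2 * t^2" using assms by (intro mult_strict_right_mono) auto
  then have "(l1 * D2)^2 < (l2 * D1)^2" unfolding power_mult_distrib D(3,4) by (simp add: algebra_simps)
  moreover have "0 \<le> l2 * D1" using assms D by simp
  ultimately have "l1 * D2 < l2 * D1" by (rule power2_less_imp_less)
  moreover have "l1 / D1 - l2 / D2 = (l1 * D2 - l2 * D1) / (D1 * D2)" using D by (simp add: field_simps)
  moreover have "0 < D1 * D2" using D by simp
  ultimately have "l1 / D1 - l2 / D2 < 0" by (simp add: divide_neg_pos)
  then show ?thesis unfolding D1_def[symmetric] D2_def[symmetric] by simp
qed

lemma mono_pt:
  fixes nu :: "real \<Rightarrow> real"
  assumes "0 < l1" "l1 \<le> l2" "\<And>x y. x \<le> y \<Longrightarrow> nu x \<le> nu y" "\<And>x. 0 \<le> nu x"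
  shows "nu (sqrt (l1^2 + t^2)) / sqrt (l1^2 + t^2) * l1 \<le> nu (sqrt (l2^2 + t^2)) / sqrt (l2^2 + t^2) * l2"
proof -
  have "l1^2 \<le> l2^2" using assms by (intro power_mono) auto
  then have "nu (sqrt (l1^2 + t^2)) \<le> nu (sqrt (l2^2 + t^2))" by (intro assms(3)) simp
  moreover have "l1 / sqrt (l1^2 + t^2) \<le> l2 / sqrt (l2^2 + t^2)" by (rule ratio_le[OF assms(1,2)])
  moreover have "0 \<le> l1 / sqrt (l1^2 + t^2)" using assms by simp
  moreover have "0 \<le> nu (sqrt (l2^2 + t^2))" by (rule assms(4))
  ultimately have "nu (sqrt (l1^2 + t^2)) * (l1 / sqrt (l1^2 + t^2)) \<le> nu (sqrt (l2^2 + t^2)) * (l2 / sqrt (l2^2 + t^2))"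
    by (intro mult_mono) auto
  then show ?thesis by simp
qed

lemma integ:
  fixes nu :: "real \<Rightarrow> real"
  assumes "0 < l" "continuous_on UNIV nu"
  shows "(\<lambda>s. nu (cat_delta g \<gamma> l mu s) / cat_delta g \<gamma> l mu s * l) integrable_on {0..1}"
proof -
  have cdpos: "0 < cat_delta g \<gamma> l mu s" for s
    unfolding cat_delta_def using assms by (simp add: add_pos_nonneg)
  have "continuous_on {0..1} (\<lambda>s. nu (cat_delta g \<gamma> l mu s) / cat_delta g \<gamma> l mu s * l)"
    unfolding cat_delta_def
    by (intro continuous_intros continuous_on_compose2[OF assms(2)])
       (use cdpos in \<open>auto simp: cat_delta_def\<close>)
  then show ?thesis using integrable_continuous_interval by blast
qed

lemma A_mono:
  fixes nu :: "real \<Rightarrow> real"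
  assumes "0 < l1" "l1 \<le> l2" "\<And>x y. x \<le> y \<Longrightarrow> nu x \<le> nu y" "\<And>x. 0 \<le> nu x" "continuous_on UNIV nu"
  shows "integral {0..1} (\<lambda>s. nu (cat_delta g \<gamma> l1 mu s) / cat_delta g \<gamma> l1 mu s * l1)
       \<le> integral {0..1} (\<lambda>s. nu (cat_delta g \<gamma> l2 mu s) / cat_delta g \<gamma> l2 mu s * l2)"
proof (rule integral_le[OF integ[OF assms(1,5)] integ[OF _ assms(5)]])
  show "0 < l2" using assms(1,2) by linarith
  fix s :: real
  show "nu (cat_delta g \<gamma> l1 mu s) / cat_delta g \<gamma> l1 mu s * l1 \<le> nu (cat_delta g \<gamma> l2 mu s) / cat_delta g \<gamma> l2 mu s * l2"
    unfolding cat_delta_def by (rule mono_pt[OF assms(1-4)])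
qed

lemma A_strict:
  fixes nu :: "real \<Rightarrow> real"
  assumes "0 < l" "l < N1" "0 < g" "0 < \<gamma>" "\<And>x. nu x \<le> nu1" "0 < nu1" "\<And>x. N1 \<le> x \<Longrightarrow> nu x = nu1" "continuous_on UNIV nu"
  shows "integral {0..1} (\<lambda>s. nu (cat_delta g \<gamma> l (-(g * \<gamma>) / 2) s) / cat_delta g \<gamma> l (-(g * \<gamma>) / 2) s * l)
       < integral {0..1} (\<lambda>s. nu (cat_delta g \<gamma> N1 (-(g * \<gamma>) / 2) s) / cat_delta g \<gamma> N1 (-(g * \<gamma>) / 2) s * N1)"
proof -
  define t where "t s = -(g * \<gamma>) / 2 + g * \<gamma> * s" for s
  define F where "F s = nu (cat_delta g \<gamma> l (-(g * \<gamma>) / 2) s) / cat_delta g \<gamma> l (-(g * \<gamma>) / 2) s * l" for s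
  define G where "G s = nu (cat_delta g \<gamma> N1 (-(g * \<gamma>) / 2) s) / cat_delta g \<gamma> N1 (-(g * \<gamma>) / 2) s * N1" for s
  define H where "H s = nu1 * (N1 / sqrt (N1^2 + (t s)^2) - l / sqrt (l^2 + (t s)^2))" for s
  have N1: "0 < N1" using assms by simp
  have Fi: "F integrable_on {0..1}" unfolding F_def by (rule integ) (use assms in auto)
  have Gi: "G integrable_on {0..1}" unfolding G_def by (rule integ) (use assms N1 in auto)
  have Geq: "G s = nu1 * (N1 / sqrt (N1^2 + (t s)^2))" for s
  proof -
    have "N1 \<le> sqrt (N1^2 + (t s)^2)" using N1 by (intro real_le_rsqrt) simp
    then have "nu (sqrt (N1^2 + (t s)^2)) = nu1" by (rule assms(7))
    then show ?thesis unfolding G_def cat_delta_def t_def[symmetric] by simp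
  qed
  have nu1: "0 \<le> nu1" using assms by simp
  have Fle: "F s \<le> nu1 * (l / sqrt (l^2 + (t s)^2))" for s
  proof -
    have "nu (sqrt (l^2 + (t s)^2)) * (l / sqrt (l^2 + (t s)^2)) \<le> nu1 * (l / sqrt (l^2 + (t s)^2))"
      using assms by (intro mult_right_mono) auto
    then show ?thesis unfolding F_def cat_delta_def t_def by simp
  qed
  have cH: "continuous_on {0..1} H" unfolding H_def t_def
    using assms N1 by (intro continuous_intros) (auto simp: add_pos_nonneg)
  have Hi1: "H integrable_on {0..1}" using cH integrable_continuous_interval by blast
  have "H integrable_on {0..1/4}" by (rule integrable_on_subinterval[OF Hi1]) auto
  note Hi = Hi1 this
  have H0: "\<forall>x\<in>{0..1}. 0 \<le> H x"
  proof
    fix x :: real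
    have "l / sqrt (l^2 + (t x)^2) \<le> N1 / sqrt (N1^2 + (t x)^2)" by (rule ratio_le) (use assms in auto)
    then show "0 \<le> H x" unfolding H_def using nu1 by simp
  qed
  have "0 < integral {0..1/4} H"
  proof (rule integral_pos_cont)
    show "continuous_on {0..1/4} H" using cH by (rule continuous_on_subset) auto
    fix s :: real assume s: "s \<in> {0..1/4}"
    have "t s = (g * \<gamma>) * (s - 1/2)" unfolding t_def by (simp add: algebra_simps)
    moreover have "0 < g * \<gamma>" using assms by simp
    moreover have "s - 1/2 < 0" using s by simp
    ultimately have "t s < 0" by (simp add: mult_pos_neg)
    then have "t s \<noteq> 0" by simp
    then have "l / sqrt (l^2 + (t s)^2) < N1 / sqrt (N1^2 + (t s)^2)" using ratio_less assms by blast
    moreover have "0 < nu1" using assms by simp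
    ultimately show "0 < H s" unfolding H_def by simp
  qed simp
  also have "\<dots> \<le> integral {0..1} H" by (rule integral_subset_le) (use Hi H0 in auto)
  also have "\<dots> \<le> integral {0..1} (\<lambda>s. G s - F s)"
    by (rule integral_le[OF Hi(1) integrable_diff[OF Gi Fi]])
       (use Fle in \<open>auto simp: Geq H_def algebra_simps\<close>)
  also have "\<dots> = integral {0..1} G - integral {0..1} F" by (rule integral_diff[OF Gi Fi])
  finally show ?thesis unfolding F_def G_def by simp
qed

lemma der_eps:
  fixes nu :: "real \<Rightarrow> real"
  assumes "(nu has_real_derivative c1) (at N1 within {..N1})" "0 < \<kappa>" "nu N1 = nu1"
  shows "\<exists>\<rho>>0. \<forall>y. N1 - \<rho> < y \<longrightarrow> y \<le> N1 \<longrightarrow> \<bar>nu y - nu1 + c1 * (N1 - y)\<bar> \<le> \<kappa> * (N1 - y)"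
proof -
  have "((\<lambda>y. (nu y - nu N1) / (y - N1)) \<longlongrightarrow> c1) (at N1 within {..N1})"
    using assms(1) has_field_derivative_iff by blast
  then have "eventually (\<lambda>y. dist ((nu y - nu N1) / (y - N1)) c1 < \<kappa>) (at N1 within {..N1})"
    using assms(2) tendstoD by blast
  then obtain d where d: "d > 0" "\<forall>y\<in>{..N1}. y \<noteq> N1 \<and> dist y N1 < d \<longrightarrow> dist ((nu y - nu N1) / (y - N1)) c1 < \<kappa>"
    unfolding eventually_at by blast
  have "\<bar>nu y - nu1 + c1 * (N1 - y)\<bar> \<le> \<kappa> * (N1 - y)" if "N1 - d < y" "y \<le> N1" for y
  proof (cases "y = N1")
    case True then show ?thesis using assms by simp
  next
    case False
    then have y: "y < N1" using that by simp
    have "\<bar>(nu y - nu1) / (y - N1) - c1\<bar> < \<kappa>" using d(2)[rule_format, of y] that y assms(3)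
      by (auto simp: dist_real_def)
    moreover have "nu y - nu1 + c1 * (N1 - y) = - ((nu y - nu1) / (y - N1) - c1) * (N1 - y)"
      using y by (simp add: field_simps)
    ultimately show ?thesis using y by (simp add: abs_mult)
  qed
  then show ?thesis using d(1) by blast
qed


theorem proposition4p3:
  fixes g \<epsilon> N0 N1 nu0 nu1 :: real and nu :: "real \<Rightarrow> real"
  assumes "0 < g"
    and "stretch_limited N0 N1 nu0 nu1 nu"
    and "0 < \<epsilon>" and "\<epsilon> < 1"
  shows "\<exists>\<gamma>0>0. \<forall>\<gamma> a lam mu. 0 < \<gamma> \<and> \<gamma> < \<gamma>0 \<and> 0 < a \<and> a < nu1 \<and> 0 < lam \<and>
           catenary_solution nu g \<gamma> a lam mu \<longrightarrow>
      ((nu1 - (g * \<gamma>)\<^sup>2 / (24 * N1\<^sup>2) * (nu1 + (2 - 3 * \<epsilon>) * left_deriv nu N1 * N1) \<le> a \<and>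
        a < nu1 * (2 * N1 / (g * \<gamma>)) * arsinh (g * \<gamma> / (2 * N1)))
       \<longrightarrow> (0 < (N1\<^sup>2 - lam\<^sup>2) / (g * \<gamma>)\<^sup>2 \<and> (N1\<^sup>2 - lam\<^sup>2) / (g * \<gamma>)\<^sup>2 < 1/4)) \<and>
      ((0 < (N1\<^sup>2 - lam\<^sup>2) / (g * \<gamma>)\<^sup>2 \<and> (N1\<^sup>2 - lam\<^sup>2) / (g * \<gamma>)\<^sup>2 < 1/4)
       \<longrightarrow> (nu1 - (g * \<gamma>)\<^sup>2 / (24 * N1\<^sup>2) * (nu1 + (2 + 3 * \<epsilon>) * left_deriv nu N1 * N1) \<le> a \<and>
            a < nu1 * (2 * N1 / (g * \<gamma>)) * arsinh (g * \<gamma> / (2 * N1))))"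
proof -
  obtain f where f: "continuous_on UNIV f" "\<And>x. nu x = f (max N0 (min N1 x))"
    "\<And>x y. x \<le> y \<Longrightarrow> nu x \<le> nu y"
    "(nu has_real_derivative deriv f N1) (at N1 within {..N1})" "deriv f N1 > 0"
    using nu_props[OF assms(2)] by blast
  define c1 where "c1 = deriv f N1"
  have ax: "N0 < 0" "0 < N1" "0 < nu0" "nu0 < 1" "1 < nu1"
    "\<And>N. N1 \<le> N \<Longrightarrow> nu N = nu1" "\<And>N. nu0 \<le> nu N" "\<And>N. nu N \<le> nu1"
    using assms(2) unfolding stretch_limited_def by auto
  have ld: "left_deriv nu N1 = c1" using left_deriv_eq f(4) unfolding c1_def by blast
  have c1: "0 < c1" using f(5) unfolding c1_def .
  have "nu = (\<lambda>x. f (max N0 (min N1 x)))" using f(2) by auto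
  moreover have cl: "continuous_on UNIV (\<lambda>x::real. max N0 (min N1 x))" by (intro continuous_intros)
  have "continuous_on UNIV (\<lambda>x. f (max N0 (min N1 x)))" using continuous_on_compose2[OF f(1) cl] by simp
  ultimately have ncont: "continuous_on UNIV nu" by simp
  have npos: "0 < nu x" for x using ax(3) ax(7)[of x] by linarith
  have nnn: "0 \<le> nu x" for x using npos[of x] by linarith
  have nu1pos: "0 < nu1" using ax by linarith
  define B where "B = c1 * N1"
  have Bpos: "0 < B" unfolding B_def using c1 ax by simp
  define \<kappa> where "\<kappa> = \<epsilon> * B / (8 * N1)"
  have kpos: "0 < \<kappa>" unfolding \<kappa>_def using assms Bpos ax by simp
  obtain \<rho> where rho: "\<rho> > 0" "\<forall>y. N1 - \<rho> < y \<longrightarrow> y \<le> N1 \<longrightarrow> \<bar>nu y - nu1 + c1 * (N1 - y)\<bar> \<le> \<kappa> * (N1 - y)"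
    using der_eps[OF f(4)[folded c1_def] kpos ax(6)[of N1]] by auto
  define K where "K = 4 * nu1 + 3 * B"
  have Kpos: "0 < K" unfolding K_def using nu1pos Bpos by simp
  define W where "W = min (1/2) (min (\<rho> / (2 * N1)) (\<epsilon> * B / (8 * K)))"
  have Wpos: "0 < W" unfolding W_def using rho ax assms Bpos Kpos by simp
  define \<gamma>0 where "\<gamma>0 = 2 * N1 * sqrt W / g"
  have g0pos: "0 < \<gamma>0" unfolding \<gamma>0_def using Wpos ax assms by simp
  show ?thesis
  proof (rule exI[of _ \<gamma>0], rule conjI[OF g0pos], intro allI impI, rule conjI)
    fix \<gamma> a lam mu
    assume H: "0 < \<gamma> \<and> \<gamma> < \<gamma>0 \<and> 0 < a \<and> a < nu1 \<and> 0 < lam \<and> catenary_solution nu g \<gamma> a lam mu"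
    then have gam: "0 < \<gamma>" "\<gamma> < \<gamma>0" and apos: "0 < a" and lpos: "0 < lam"
      and eq1: "a = integral {0..1} (\<lambda>s. nu (cat_delta g \<gamma> lam mu s) / cat_delta g \<gamma> lam mu s * lam)"
      and eq2: "0 = integral {0..1} (\<lambda>s. nu (cat_delta g \<gamma> lam mu s) / cat_delta g \<gamma> lam mu s * (mu + g * \<gamma> * s))"
      unfolding catenary_solution_def by auto
    define h where "h = g * \<gamma>"
    have hpos: "0 < h" unfolding h_def using assms gam by simp
    define w where "w = (g * \<gamma>)^2 / (4 * N1^2)"
    have wpos: "0 < w" unfolding w_def using hpos ax unfolding h_def by (intro divide_pos_pos) auto
    have "h < 2 * N1 * sqrt W" using gam(2) assms(1) unfolding \<gamma>0_def h_def by (simp add: field_simps)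
    then have "h^2 < (2 * N1 * sqrt W)^2" using hpos by (intro power_strict_mono) auto
    also have "\<dots> = 4 * N1^2 * W" using Wpos by (simp add: power_mult_distrib)
    finally have "w < W" unfolding w_def h_def[symmetric] using ax by (simp add: field_simps)
    then have wb: "w \<le> 1/2" "w < \<rho> / (2 * N1)" "w < \<epsilon> * B / (8 * K)" unfolding W_def by auto
    have wrho: "N1 * w < \<rho>" using wb(2) ax rho wpos by (simp add: field_simps)
    have mueq: "mu = - (g * \<gamma>) / 2"
      by (rule mu_eq[OF lpos assms(1) gam(1) f(3) npos ncont eq2])
    define A where "A l = integral {0..1} (\<lambda>s. nu (cat_delta g \<gamma> l (-(g * \<gamma>) / 2) s) / cat_delta g \<gamma> l (-(g * \<gamma>) / 2) s * l)" for l
    have aA: "a = A lam" using eq1 unfolding mueq A_def .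
    define lamS where "lamS = sqrt (N1^2 - (g * \<gamma>)^2 / 4)"
    have lS2: "N1^2 - (g * \<gamma>)^2 / 4 = N1^2 * (1 - w)" unfolding w_def using ax by (simp add: field_simps)
    have lSpos: "0 < lamS" unfolding lamS_def lS2 using ax wb by simp
    have lSsq: "lamS^2 = N1^2 - (g * \<gamma>)^2 / 4" unfolding lamS_def lS2 using wb by simp
    have est: "\<bar>A lamS - (nu1 - w / 6 * (nu1 + 2 * (c1 * N1)))\<bar> \<le> (4 * nu1 + 3 * (c1 * N1)) * w^2 + 2 * \<kappa> * N1 * w"
      unfolding A_def
      by (rule est_int[OF ax(2) c1 less_imp_le[OF kpos] _ nnn ax(8) ncont assms(1) gam(1) lamS_def w_def wb(1) wrho])
         (use rho in auto)
    have "K * w * w < K * w * (\<epsilon> * B / (8 * K))" by (rule mult_strict_left_mono) (use wb Kpos wpos in auto)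
    then have "K * w^2 < K * w * (\<epsilon> * B / (8 * K))" by (simp add: power2_eq_square)
    also have "\<dots> = \<epsilon> * B * w / 8" using Kpos by simp
    finally have k1: "K * w^2 < \<epsilon> * B * w / 8" .
    have k2: "2 * \<kappa> * N1 * w = \<epsilon> * B * w / 4" unfolding \<kappa>_def using ax by (simp add: field_simps)
    have k3: "0 < \<epsilon> * B * w" using assms(3) Bpos wpos by simp
    have "K * w^2 + 2 * \<kappa> * N1 * w < \<epsilon> * B * w / 2" using k1 k2 k3 by linarith
    then have Ew: "(4 * nu1 + 3 * (c1 * N1)) * w^2 + 2 * \<kappa> * N1 * w < \<epsilon> * B * w / 2"
      unfolding K_def B_def .
    have L1: "nu1 - (g * \<gamma>)\<^sup>2 / (24 * N1\<^sup>2) * (nu1 + (2 - 3 * \<epsilon>) * left_deriv nu N1 * N1)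
       = (nu1 - w / 6 * (nu1 + 2 * (c1 * N1))) + \<epsilon> * B * w / 2"
      unfolding ld w_def B_def using ax by (simp add: field_simps)
    have L2: "nu1 - (g * \<gamma>)\<^sup>2 / (24 * N1\<^sup>2) * (nu1 + (2 + 3 * \<epsilon>) * left_deriv nu N1 * N1)
       = (nu1 - w / 6 * (nu1 + 2 * (c1 * N1))) - \<epsilon> * B * w / 2"
      unfolding ld w_def B_def using ax by (simp add: field_simps)
    have AS1: "A lamS < nu1 - (g * \<gamma>)\<^sup>2 / (24 * N1\<^sup>2) * (nu1 + (2 - 3 * \<epsilon>) * left_deriv nu N1 * N1)"
      unfolding L1 using est Ew by (simp add: abs_le_iff)
    have AS2: "nu1 - (g * \<gamma>)\<^sup>2 / (24 * N1\<^sup>2) * (nu1 + (2 + 3 * \<epsilon>) * left_deriv nu N1 * N1) < A lamS"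
      unfolding L2 using est Ew by (simp add: abs_le_iff)
    have AN1: "A N1 = nu1 * (2 * N1 / (g * \<gamma>)) * arsinh (g * \<gamma> / (2 * N1))"
    proof -
      have "A N1 = integral {0..1} (\<lambda>s. nu1 / sqrt (N1^2 + (- h / 2 + h * s)^2) * N1)"
        unfolding A_def
      proof (rule integral_cong)
        fix s :: real
        have "N1 \<le> sqrt (N1^2 + (- h / 2 + h * s)^2)" using ax by (intro real_le_rsqrt) simp
        then show "nu (cat_delta g \<gamma> N1 (-(g * \<gamma>) / 2) s) / cat_delta g \<gamma> N1 (-(g * \<gamma>) / 2) s * N1
            = nu1 / sqrt (N1^2 + (- h / 2 + h * s)^2) * N1"
          unfolding cat_delta_def h_def using ax(6) by simp
      qed
      also have "\<dots> = nu1 * (2 * N1 / h) * arsinh (h / (2 * N1))"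
        by (rule integral_unique[OF arsinh_int[OF ax(2) hpos]])
      finally show ?thesis unfolding h_def .
    qed
    have Aml: "A l1 \<le> A l2" if "0 < l1" "l1 \<le> l2" for l1 l2
      unfolding A_def by (rule A_mono[OF that f(3) nnn ncont])
    have Ast: "A l < A N1" if "0 < l" "l < N1" for l
      unfolding A_def by (rule A_strict[OF that assms(1) gam(1) ax(8) nu1pos ax(6) ncont])
    have hsq: "0 < (g * \<gamma>)^2" using hpos unfolding h_def by (intro zero_less_power)
    have Q: "(0 < (N1\<^sup>2 - lam\<^sup>2) / (g * \<gamma>)\<^sup>2 \<and> (N1\<^sup>2 - lam\<^sup>2) / (g * \<gamma>)\<^sup>2 < 1/4)
          \<longleftrightarrow> (lam < N1 \<and> lamS < lam)"
    proof -
      have "0 < (N1\<^sup>2 - lam\<^sup>2) / (g * \<gamma>)\<^sup>2 \<longleftrightarrow> lam^2 < N1^2" using hsq by (simp add: zero_less_divide_iff)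
      also have "\<dots> \<longleftrightarrow> lam < N1"
      proof
        assume "lam^2 < N1^2" then show "lam < N1" using power_less_imp_less_base[of lam 2 N1] ax by simp
      next
        assume "lam < N1" then show "lam^2 < N1^2" using power_strict_mono[of lam N1 2] lpos by simp
      qed
      finally have 1: "0 < (N1\<^sup>2 - lam\<^sup>2) / (g * \<gamma>)\<^sup>2 \<longleftrightarrow> lam < N1" .
      have "(N1\<^sup>2 - lam\<^sup>2) / (g * \<gamma>)\<^sup>2 < 1/4 \<longleftrightarrow> lamS^2 < lam^2" unfolding lSsq using hsq by (simp add: field_simps)
      also have "\<dots> \<longleftrightarrow> lamS < lam"
      proof
        assume "lamS^2 < lam^2" then show "lamS < lam" using power_less_imp_less_base[of lamS 2 lam] lpos by simp
      next
        assume "lamS < lam" then show "lamS^2 < lam^2" using power_strict_mono[of lamS lam 2] lSpos by simp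
      qed
      finally show ?thesis using 1 by blast
    qed
    show "(nu1 - (g * \<gamma>)\<^sup>2 / (24 * N1\<^sup>2) * (nu1 + (2 - 3 * \<epsilon>) * left_deriv nu N1 * N1) \<le> a \<and>
        a < nu1 * (2 * N1 / (g * \<gamma>)) * arsinh (g * \<gamma> / (2 * N1)))
       \<longrightarrow> (0 < (N1\<^sup>2 - lam\<^sup>2) / (g * \<gamma>)\<^sup>2 \<and> (N1\<^sup>2 - lam\<^sup>2) / (g * \<gamma>)\<^sup>2 < 1/4)"
    proof
      assume P: "nu1 - (g * \<gamma>)\<^sup>2 / (24 * N1\<^sup>2) * (nu1 + (2 - 3 * \<epsilon>) * left_deriv nu N1 * N1) \<le> a \<and>
        a < nu1 * (2 * N1 / (g * \<gamma>)) * arsinh (g * \<gamma> / (2 * N1))"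
      have "lam < N1"
      proof (rule ccontr)
        assume "\<not> lam < N1"
        then have "A N1 \<le> A lam" using Aml[of N1 lam] ax by simp
        then show False using P aA AN1 by simp
      qed
      moreover have "lamS < lam"
      proof (rule ccontr)
        assume "\<not> lamS < lam"
        then have "A lam \<le> A lamS" using Aml[of lam lamS] lpos by simp
        then show False using P aA AS1 by simp
      qed
      ultimately show "0 < (N1\<^sup>2 - lam\<^sup>2) / (g * \<gamma>)\<^sup>2 \<and> (N1\<^sup>2 - lam\<^sup>2) / (g * \<gamma>)\<^sup>2 < 1/4"
        using Q by blast
    qed
    show "(0 < (N1\<^sup>2 - lam\<^sup>2) / (g * \<gamma>)\<^sup>2 \<and> (N1\<^sup>2 - lam\<^sup>2) / (g * \<gamma>)\<^sup>2 < 1/4)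
       \<longrightarrow> (nu1 - (g * \<gamma>)\<^sup>2 / (24 * N1\<^sup>2) * (nu1 + (2 + 3 * \<epsilon>) * left_deriv nu N1 * N1) \<le> a \<and>
            a < nu1 * (2 * N1 / (g * \<gamma>)) * arsinh (g * \<gamma> / (2 * N1)))"
    proof
      assume "0 < (N1\<^sup>2 - lam\<^sup>2) / (g * \<gamma>)\<^sup>2 \<and> (N1\<^sup>2 - lam\<^sup>2) / (g * \<gamma>)\<^sup>2 < 1/4"
      then have lr: "lam < N1" "lamS < lam" using Q by auto
      have "A lamS \<le> A lam" using Aml[of lamS lam] lSpos lr by simp
      moreover have "A lam < A N1" using Ast[of lam] lpos lr by simp
      ultimately show "nu1 - (g * \<gamma>)\<^sup>2 / (24 * N1\<^sup>2) * (nu1 + (2 + 3 * \<epsilon>) * left_deriv nu N1 * N1) \<le> a \<and>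
            a < nu1 * (2 * N1 / (g * \<gamma>)) * arsinh (g * \<gamma> / (2 * N1))"
        using AS2 aA AN1 by simp
    qed
  qed
qed

end
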